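(* Let $k\ge 3$ and let $n$ be sufficiently large. Define $f(n,k)=\frac{n}{k}$ if $n$ is even and $f(n,k)=\frac{n-1}{2k}$ if $n$ is odd. If $n$ is even, then $f(n,k)\cdot\mathsf{m}(k-1) \le N(BM,k,n) \le N(GM,k,n)$. If $n$ is odd, then $f(n,k)\cdot\mathsf{m}(k-1) \le N(GM,k,n)$ and $f(n,k)\cdot \mathsf{m}(k-2) \le N(BM,k,n)$.
   Context: We are given $n$ balls, the set $[n]=\{1,\dots,n\}$, each colored with one of two colors by an unknown coloring. A ball $i$ is a majority ball if more than $n/2$ balls have the same color as $i$. A query is a subset $Q\subseteq[n]$ with $|Q|=k$. In the General (Yes-No) Model (GM), the answer to a query $Q$ is YES if $Q$ contains two balls of different colors and NO otherwise. In Borzyszkowski's Model (BM), the answer is YES together with a pair of balls of $Q$ having different colors (the pair may be any such pair) if such a pair exists, and NO if all balls of $Q$ have the same color. A non-adaptive strategy is a family of queries $Q_1,\dots,Q_q$ fixed in advance. It succeeds if for every coloring and every admissible sequence of answers, the answers determine the outcome: either every coloring consistent with the answers has no majority ball, or there is a ball that is a majority ball in every coloring consistent with the answers. $N(GM,k,n)$ and $N(BM,k,n)$ denote the minimum number of queries in a successful non-adaptive strategy in the respective model. A hypergraph has Property B if its vertices can be 2-colored with no monochromatic edge. For $k\ge 1$, $\mathsf{m}(k)$ is the minimum number of edges of a $k$-uniform hypergraph that does not have Property B. *)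

theory Defs
  imports Complex_Main
begin

text \<open>Balls are 1..n; a coloring is a function nat => bool (only values on 1..n matter).\<close>

definition majority :: "nat \<Rightarrow> (nat \<Rightarrow> bool) \<Rightarrow> nat \<Rightarrow> bool" where
  "majority n c i \<longleftrightarrow> i \<in> {1..n} \<and> 2 * card {j \<in> {1..n}. c j = c i} > n"

definition determined :: "nat \<Rightarrow> (nat \<Rightarrow> bool) set \<Rightarrow> bool" where
  "determined n S \<longleftrightarrow>
     (\<forall>c\<in>S. \<forall>i. \<not> majority n c i) \<or> (\<exists>i\<in>{1..n}. \<forall>c\<in>S. majority n c i)"

definition valid_strategy :: "nat \<Rightarrow> nat \<Rightarrow> nat set list \<Rightarrow> bool" where
  "valid_strategy n k Qs \<longleftrightarrow> (\<forall>Q\<in>set Qs. Q \<subseteq> {1..n} \<and> card Q = k)"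

definition gm_ans :: "(nat \<Rightarrow> bool) \<Rightarrow> nat set \<Rightarrow> bool" where
  "gm_ans c Q \<longleftrightarrow> (\<exists>a\<in>Q. \<exists>b\<in>Q. c a \<noteq> c b)"

definition gm_success :: "nat \<Rightarrow> nat set list \<Rightarrow> bool" where
  "gm_success n Qs \<longleftrightarrow>
     (\<forall>c. determined n {c'. \<forall>Q\<in>set Qs. gm_ans c' Q = gm_ans c Q})"

text \<open>Borzyszkowski's model: answer None = NO, Some (a,b) = YES with a witnessing pair.
  An answer is admissible for coloring c if it is a truthful answer of this form.\<close>
definition bm_adm :: "(nat \<Rightarrow> bool) \<Rightarrow> nat set \<Rightarrow> (nat \<times> nat) option \<Rightarrow> bool" where
  "bm_adm c Q a \<longleftrightarrow>
     (a = None \<and> \<not> gm_ans c Q) \<or>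
     (\<exists>x y. a = Some (x, y) \<and> x \<in> Q \<and> y \<in> Q \<and> c x \<noteq> c y)"

definition bm_success :: "nat \<Rightarrow> nat set list \<Rightarrow> bool" where
  "bm_success n Qs \<longleftrightarrow>
     (\<forall>c As. length As = length Qs \<and> (\<forall>i<length Qs. bm_adm c (Qs ! i) (As ! i)) \<longrightarrow>
        determined n {c'. \<forall>i<length Qs. bm_adm c' (Qs ! i) (As ! i)})"

definition N_GM :: "nat \<Rightarrow> nat \<Rightarrow> nat" where
  "N_GM k n = (LEAST q. \<exists>Qs. length Qs = q \<and> valid_strategy n k Qs \<and> gm_success n Qs)"

definition N_BM :: "nat \<Rightarrow> nat \<Rightarrow> nat" where
  "N_BM k n = (LEAST q. \<exists>Qs. length Qs = q \<and> valid_strategy n k Qs \<and> bm_success n Qs)"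

definition propB :: "nat set set \<Rightarrow> bool" where
  "propB E \<longleftrightarrow> (\<exists>c :: nat \<Rightarrow> bool. \<forall>e\<in>E. \<exists>a\<in>e. \<exists>b\<in>e. c a \<noteq> c b)"

definition mB :: "nat \<Rightarrow> nat" where
  "mB k = (LEAST q. \<exists>E :: nat set set. finite E \<and> (\<forall>e\<in>E. card e = k) \<and> \<not> propB E \<and> card E = q)"

definition f :: "nat \<Rightarrow> nat \<Rightarrow> real" where
  "f n k = (if even n then real n / real k else (real n - 1) / (2 * real k))"

end

theory Submission
  imports Defs
begin


definition hc :: "nat set list \<Rightarrow> nat \<Rightarrow> nat" where
  "hc Qs x = card {Q \<in> set Qs. x \<in> Q}"

lemma mB_propB:
  assumes "finite E" "\<forall>e\<in>E. card e = j" "card E < mB j"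
  shows "propB E"
  using not_less_Least[OF assms(3)[unfolded mB_def]] assms(1,2) by blast

lemma maj_set:
  assumes "A \<subseteq> {1..n}"
  shows "majority n (\<lambda>j. j \<in> A) i \<longleftrightarrow> i \<in> {1..n} \<and> (if i \<in> A then n < 2 * card A else n < 2 * (n - card A))"
proof -
  have "{j \<in> {1..n}. (j \<in> A) = (i \<in> A)} = (if i \<in> A then A else {1..n} - A)" using assms by auto
  moreover have "card ({1..n} - A) = n - card A" using assms by (simp add: card_Diff_subset finite_subset)
  ultimately show ?thesis unfolding majority_def by auto
qed

definition aw :: "(nat \<Rightarrow> bool) \<Rightarrow> (nat \<Rightarrow> bool) \<Rightarrow> nat set \<Rightarrow> bool" where
  "aw c c' Q \<longleftrightarrow> (\<forall>a\<in>Q. c a = c' a) \<or> (\<exists>a\<in>Q. \<exists>b\<in>Q. c a \<noteq> c b \<and> c' a \<noteq> c' b)"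

lemma aw_gm: "aw c c' Q \<Longrightarrow> gm_ans c' Q = gm_ans c Q"
  unfolding aw_def gm_ans_def by blast

lemma gm_fail:
  assumes "\<forall>Q\<in>set Qs. aw c1 c2 Q \<and> aw c1 c3 Q"
    "\<forall>i. \<not>(majority n c1 i \<and> majority n c2 i \<and> majority n c3 i)"
    "\<exists>i. majority n c1 i \<or> majority n c2 i \<or> majority n c3 i"
  shows "\<not> gm_success n Qs"
proof
  assume "gm_success n Qs"
  hence "determined n {c'. \<forall>Q\<in>set Qs. gm_ans c' Q = gm_ans c1 Q}" unfolding gm_success_def by blast
  moreover have "c1 \<in> {c'. \<forall>Q\<in>set Qs. gm_ans c' Q = gm_ans c1 Q}"
     "c2 \<in> {c'. \<forall>Q\<in>set Qs. gm_ans c' Q = gm_ans c1 Q}"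
     "c3 \<in> {c'. \<forall>Q\<in>set Qs. gm_ans c' Q = gm_ans c1 Q}" using assms(1) aw_gm by auto
  ultimately show False using assms(2,3) unfolding determined_def by blast
qed

definition aw3 :: "(nat \<Rightarrow> bool) \<Rightarrow> (nat \<Rightarrow> bool) \<Rightarrow> (nat \<Rightarrow> bool) \<Rightarrow> nat set \<Rightarrow> bool" where
  "aw3 c1 c2 c3 Q \<longleftrightarrow> (\<forall>a\<in>Q. c1 a = c2 a \<and> c1 a = c3 a) \<or>
     (\<exists>a\<in>Q. \<exists>b\<in>Q. c1 a \<noteq> c1 b \<and> c2 a \<noteq> c2 b \<and> c3 a \<noteq> c3 b)"

lemma bm_adm_SomeI: "fst p \<in> Q \<Longrightarrow> snd p \<in> Q \<Longrightarrow> c (fst p) \<noteq> c (snd p) \<Longrightarrow> bm_adm c Q (Some p)"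
  unfolding bm_adm_def by (cases p) auto

lemma gm_agree: "\<forall>a\<in>Q. c a = c' a \<Longrightarrow> gm_ans c' Q = gm_ans c Q"
  unfolding gm_ans_def by auto

lemma bm_fail:
  assumes "\<forall>Q\<in>set Qs. aw3 c1 c2 c3 Q"
    "\<forall>i. \<not>(majority n c1 i \<and> majority n c2 i \<and> majority n c3 i)"
    "\<exists>i. majority n c1 i \<or> majority n c2 i \<or> majority n c3 i"
  shows "\<not> bm_success n Qs"
proof
  assume bm: "bm_success n Qs"
  define W where "W Q = (\<exists>a\<in>Q. \<exists>b\<in>Q. c1 a \<noteq> c1 b \<and> c2 a \<noteq> c2 b \<and> c3 a \<noteq> c3 b)" for Q
  define P3 where "P3 Q p = (fst p \<in> Q \<and> snd p \<in> Q \<and> c1 (fst p) \<noteq> c1 (snd p) \<and> c2 (fst p) \<noteq> c2 (snd p) \<and> c3 (fst p) \<noteq> c3 (snd p))" for Q p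
  define P1 where "P1 Q p = (fst p \<in> Q \<and> snd p \<in> Q \<and> c1 (fst p) \<noteq> c1 (snd p))" for Q p
  define ans where "ans Q = (if W Q then Some (SOME p. P3 Q p) else if gm_ans c1 Q then Some (SOME p. P1 Q p) else None)" for Q
  have adm: "bm_adm c1 Q (ans Q) \<and> bm_adm c2 Q (ans Q) \<and> bm_adm c3 Q (ans Q)" if "Q \<in> set Qs" for Q
  proof (cases "W Q")
    case True
    then obtain a b where "P3 Q (a,b)" unfolding W_def P3_def by auto
    define p where "p = (SOME p. P3 Q p)"
    have p: "P3 Q p" unfolding p_def by (rule someI) fact
    have e: "ans Q = Some (fst p, snd p)" using True unfolding ans_def p_def by simp
    have "fst p \<in> Q" "snd p \<in> Q" "c1 (fst p) \<noteq> c1 (snd p)" "c2 (fst p) \<noteq> c2 (snd p)" "c3 (fst p) \<noteq> c3 (snd p)"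
      using p unfolding P3_def by auto
    then have "bm_adm c1 Q (Some p)" "bm_adm c2 Q (Some p)" "bm_adm c3 Q (Some p)" by (blast intro: bm_adm_SomeI)+
    then show ?thesis using e by simp
  next
    case False
    then have agree: "\<forall>a\<in>Q. c1 a = c2 a \<and> c1 a = c3 a" using assms(1) that unfolding aw3_def W_def by blast
    show ?thesis
    proof (cases "gm_ans c1 Q")
      case True
      then obtain a b where "P1 Q (a,b)" unfolding gm_ans_def P1_def by auto
      define p where "p = (SOME p. P1 Q p)"
      have p: "P1 Q p" unfolding p_def by (rule someI) fact
      have e: "ans Q = Some (fst p, snd p)" using True False unfolding ans_def p_def by simp
      have "fst p \<in> Q" "snd p \<in> Q" "c1 (fst p) \<noteq> c1 (snd p)" using p unfolding P1_def by auto
      moreover have "c2 (fst p) \<noteq> c2 (snd p)" "c3 (fst p) \<noteq> c3 (snd p)" using calculation agree by auto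
      ultimately have "bm_adm c1 Q (Some p)" "bm_adm c2 Q (Some p)" "bm_adm c3 Q (Some p)" by (blast intro: bm_adm_SomeI)+
    then show ?thesis using e by simp
    next
      case F2: False
      have "gm_ans c2 Q = gm_ans c1 Q" "gm_ans c3 Q = gm_ans c1 Q" using agree gm_agree[of Q c1 c2] gm_agree[of Q c1 c3] by auto
      then have "\<not> gm_ans c2 Q" "\<not> gm_ans c3 Q" using F2 by auto
      moreover have "ans Q = None" using F2 False unfolding ans_def by simp
      ultimately show ?thesis using F2 unfolding bm_adm_def by simp
    qed
  qed
  define As where "As = map ans Qs"
  define S where "S = {c'. \<forall>i<length Qs. bm_adm c' (Qs ! i) (As ! i)}"
  have len: "length As = length Qs" unfolding As_def by simp
  have a1: "\<forall>i<length Qs. bm_adm c1 (Qs ! i) (As ! i)" and a2: "\<forall>i<length Qs. bm_adm c2 (Qs ! i) (As ! i)"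
    and a3: "\<forall>i<length Qs. bm_adm c3 (Qs ! i) (As ! i)"
  proof -
    have "bm_adm c1 (Qs ! i) (As ! i) \<and> bm_adm c2 (Qs ! i) (As ! i) \<and> bm_adm c3 (Qs ! i) (As ! i)" if "i < length Qs" for i
    proof -
      have "As ! i = ans (Qs ! i)" using that unfolding As_def by simp
      moreover have "Qs ! i \<in> set Qs" using that by simp
      ultimately show ?thesis using adm by simp
    qed
    then show "\<forall>i<length Qs. bm_adm c1 (Qs ! i) (As ! i)" "\<forall>i<length Qs. bm_adm c2 (Qs ! i) (As ! i)"
      "\<forall>i<length Qs. bm_adm c3 (Qs ! i) (As ! i)" by blast+
  qed
  have "determined n S"
    using bm len a1 unfolding bm_success_def S_def by simp
  moreover have "c1 \<in> S" "c2 \<in> S" "c3 \<in> S" using a1 a2 a3 unfolding S_def by auto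
  ultimately show False using assms(2,3) unfolding determined_def by blast
qed

lemma extend:
  assumes "finite V" "V \<subseteq> {1..n}" "card V \<le> t" "card V + t \<le> n"
  shows "\<exists>A. A \<subseteq> {1..n} \<and> card A = t \<and> (\<forall>j\<in>V. j \<in> A \<longleftrightarrow> d j)"
proof -
  define P where "P = {j\<in>V. d j}"
  have cP: "card P \<le> card V" unfolding P_def using assms(1) by (intro card_mono) auto
  have "card ({1..n} - V) = n - card V" using assms by (simp add: card_Diff_subset)
  hence "t - card P \<le> card ({1..n} - V)" using assms cP by linarith
  then obtain W where W: "W \<subseteq> {1..n} - V" "card W = t - card P" "finite W"
    by (rule obtain_subset_with_card_n)
  have fP: "finite P" using assms(1) P_def by simp
  have "card (P \<union> W) = card P + card W" using W fP P_def by (intro card_Un_disjoint) auto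
  hence "card (P \<union> W) = t" using W cP assms by simp
  moreover have "P \<union> W \<subseteq> {1..n}" using W assms P_def by auto
  moreover have "\<forall>j\<in>V. j \<in> P \<union> W \<longleftrightarrow> d j" using W P_def by auto
  ultimately show ?thesis by blast
qed

lemma sum_hc:
  assumes "valid_strategy n k Qs"
  shows "(\<Sum>x\<in>{1..n}. hc Qs x) \<le> k * length Qs"
proof -
  have "(\<Sum>x\<in>{1..n}. hc Qs x) = (\<Sum>Q\<in>set Qs. k)"
    unfolding hc_def
  proof (rule sum_multicount_gen)
    show "\<forall>Q\<in>set Qs. card {i \<in> {1..n}. i \<in> Q} = k"
    proof
      fix Q assume "Q \<in> set Qs"
      hence "Q \<subseteq> {1..n}" "card Q = k" using assms unfolding valid_strategy_def by auto
      moreover have "{i \<in> {1..n}. i \<in> Q} = Q" using calculation by auto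
      ultimately show "card {i \<in> {1..n}. i \<in> Q} = k" by simp
    qed
  qed auto
  also have "\<dots> = k * card (set Qs)" by simp
  also have "\<dots> \<le> k * length Qs" by (simp add: card_length)
  finally show ?thesis .
qed



lemma recolor: assumes d: "\<forall>e\<in>E. \<exists>a\<in>e. \<exists>b\<in>e. (d::nat\<Rightarrow>bool) a \<noteq> d b" and "e \<in> E"
  shows "\<exists>a\<in>e. \<exists>b\<in>e. (d a = d x) \<noteq> (d b = d x)"
proof -
  obtain a b where ab: "a\<in>e" "b\<in>e" "d a \<noteq> d b" using d assms(2) by meson
  then have "(d a = d x) \<noteq> (d b = d x)" by (cases "d a"; cases "d b"; cases "d x") auto
  then show ?thesis using ab(1,2) by meson
qed

lemma realize:
  assumes "finite E" "\<forall>e\<in>E. e \<subseteq> {1..n} \<and> card e = j" "card E < mB j" "x \<in> {1..n}"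
    "j * mB j + 1 \<le> t" "t + j * mB j + 1 \<le> n"
  shows "\<exists>A. A \<subseteq> {1..n} \<and> card A = t \<and> x \<in> A \<and> (\<forall>e\<in>E. \<exists>a\<in>e. \<exists>b\<in>e. (a \<in> A) \<noteq> (b \<in> A))"
proof -
  have cj: "\<forall>e\<in>E. card e = j" using assms(2) by blast
  have "propB E" by (rule mB_propB[OF assms(1) cj assms(3)])
  then have "\<exists>d::nat\<Rightarrow>bool. \<forall>e\<in>E. \<exists>a\<in>e. \<exists>b\<in>e. d a \<noteq> d b" unfolding propB_def .
  then obtain d :: "nat \<Rightarrow> bool" where d: "\<forall>e\<in>E. \<exists>a\<in>e. \<exists>b\<in>e. d a \<noteq> d b" by (rule someI_ex[elim_format])
  define d' where "d' = (\<lambda>j. d j = d x)"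
  have d': "\<forall>e\<in>E. \<exists>a\<in>e. \<exists>b\<in>e. d' a \<noteq> d' b" "d' x"
    using recolor[OF d] unfolding d'_def by auto
  define V where "V = insert x (\<Union>E)"
  have fe: "finite e" if "e \<in> E" for e using assms(2) that finite_subset[of e "{1..n}"] by auto
  have fV: "finite V" unfolding V_def using assms(1) fe by auto
  have VS: "V \<subseteq> {1..n}" unfolding V_def using assms(2,4) by auto
  have "card (\<Union>E) \<le> (\<Sum>e\<in>E. card e)" by (rule card_Union_le_sum_card)
  also have "\<dots> = j * card E" using assms(2) by simp
  also have "\<dots> \<le> j * mB j" using assms(3) by simp
  finally have cU: "card (\<Union>E) \<le> j * mB j" .
  have "finite (\<Union>E)" using assms(1) fe by auto
  then have "card V \<le> card (\<Union>E) + 1" unfolding V_def by (simp add: card_insert_if)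
  then have "card V \<le> j * mB j + 1" using cU by linarith
  then obtain A where A: "A \<subseteq> {1..n}" "card A = t" "\<forall>j\<in>V. j \<in> A \<longleftrightarrow> d' j"
    using extend[OF fV VS, of t d'] assms(5,6) by auto
  have xA: "x \<in> A" using A(3) d'(2) V_def by auto
  have P: "\<forall>e\<in>E. \<exists>a\<in>e. \<exists>b\<in>e. (a \<in> A) \<noteq> (b \<in> A)"
  proof
    fix e assume "e \<in> E"
    then obtain a b where ab: "a \<in> e" "b \<in> e" "d' a \<noteq> d' b" using d'(1) by meson
    moreover have "a \<in> V" "b \<in> V" using ab \<open>e \<in> E\<close> V_def by auto
    ultimately have "(a \<in> A) = d' a" "(b \<in> A) = d' b" using A(3) by auto
    then have "(a \<in> A) \<noteq> (b \<in> A)" using ab(3) by simp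
    then show "\<exists>a\<in>e. \<exists>b\<in>e. (a \<in> A) \<noteq> (b \<in> A)" using ab(1,2) by meson
  qed
  show ?thesis using A(1,2) xA P by (intro exI[of _ A] conjI)
qed



lemma odd_maj:
  assumes "odd n" "A \<subseteq> {1..n}" "card A = n div 2 + 1" "x \<in> A" "y \<in> {1..n}" "x \<noteq> y"
  defines "B \<equiv> (if y \<in> A then A - {y} else insert y (A - {x}))"
  shows "\<forall>i. \<not>(majority n (\<lambda>j. j\<in>A) i \<and> majority n (\<lambda>j. j \<in> A - {x}) i \<and> majority n (\<lambda>j. j \<in> B) i)"
    and "\<exists>i. majority n (\<lambda>j. j\<in>A) i \<or> majority n (\<lambda>j. j \<in> A - {x}) i \<or> majority n (\<lambda>j. j \<in> B) i"
proof -
  have n: "n = 2 * (n div 2) + 1" using assms(1) by presburger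
  have fA: "finite A" using assms(2) finite_subset by blast
  have cx: "card (A - {x}) = n div 2" using assms(3,4) fA by simp
  have s2: "A - {x} \<subseteq> {1..n}" using assms(2) by auto
  have sB: "B \<subseteq> {1..n}" unfolding B_def using assms(2,5) by auto
  have m1: "majority n (\<lambda>j. j\<in>A) i \<Longrightarrow> i \<in> A" for i
    using maj_set[OF assms(2), of i] assms(3) n by (auto split: if_splits)
  have m2: "majority n (\<lambda>j. j\<in>A - {x}) i \<Longrightarrow> i \<notin> A - {x}" for i
    using maj_set[OF s2, of i] cx n by (auto split: if_splits)
  show "\<forall>i. \<not>(majority n (\<lambda>j. j\<in>A) i \<and> majority n (\<lambda>j. j \<in> A - {x}) i \<and> majority n (\<lambda>j. j \<in> B) i)"
  proof (intro allI notI)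
    fix i assume h: "majority n (\<lambda>j. j\<in>A) i \<and> majority n (\<lambda>j. j \<in> A - {x}) i \<and> majority n (\<lambda>j. j \<in> B) i"
    then have ix: "i = x" using m1 m2 by blast
    show False
    proof (cases "y \<in> A")
      case True
      then have cB: "card B = n div 2" unfolding B_def using assms(3) fA by simp
      have "i \<notin> B" using h maj_set[OF sB, of i] cB n by (auto split: if_splits)
      then show False using ix True assms(4,6) B_def by auto
    next
      case False
      then have cB: "card B = n div 2 + 1" unfolding B_def using cx fA by simp
      have "i \<in> B" using h maj_set[OF sB, of i] cB n by (auto split: if_splits)
      then show False using ix False assms(4,6) B_def by auto
    qed
  qed
  show "\<exists>i. majority n (\<lambda>j. j\<in>A) i \<or> majority n (\<lambda>j. j \<in> A - {x}) i \<or> majority n (\<lambda>j. j \<in> B) i"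
    using maj_set[OF assms(2), of x] assms n by auto
qed

lemma even_maj:
  assumes "even n" "A \<subseteq> {1..n}" "card A = n div 2" "x \<in> A"
  shows "\<forall>i. \<not> majority n (\<lambda>j. j\<in>A) i" and "majority n (\<lambda>j. j \<in> A - {x}) x"
proof -
  have n: "n = 2 * (n div 2)" using assms(1) by presburger
  have fA: "finite A" using assms(2) finite_subset by blast
  have "card A > 0" using fA assms(4) card_gt_0_iff by blast
  have cx: "card (A - {x}) = n div 2 - 1" using assms(3,4) fA by simp
  have s2: "A - {x} \<subseteq> {1..n}" using assms(2) by auto
  show "\<forall>i. \<not> majority n (\<lambda>j. j\<in>A) i" using maj_set[OF assms(2)] assms(3) n by auto
  show "majority n (\<lambda>j. j \<in> A - {x}) x" using maj_set[OF s2, of x] cx n assms \<open>card A > 0\<close> by auto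
qed



lemma awI2: "a \<in> Q \<Longrightarrow> b \<in> Q \<Longrightarrow> c a \<noteq> c b \<Longrightarrow> c' a \<noteq> c' b \<Longrightarrow> aw c c' Q"
  unfolding aw_def by blast

lemma awI1: "\<forall>a\<in>Q. c a = c' a \<Longrightarrow> aw c c' Q"
  unfolding aw_def by blast

lemma aw_single:
  assumes "\<forall>j. j \<noteq> x \<longrightarrow> c' j = c j" "x \<in> Q \<longrightarrow> (\<exists>a\<in>Q-{x}. \<exists>b\<in>Q-{x}. c a \<noteq> c b)"
  shows "aw c c' Q"
proof (cases "x \<in> Q")
  case True
  then obtain a b where ab: "a\<in>Q" "a \<noteq> x" "b\<in>Q" "b \<noteq> x" "c a \<noteq> c b" using assms(2) by blast
  then have "c' a = c a" "c' b = c b" using assms(1) by auto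
  then show ?thesis using ab by (intro awI2[of a Q b]) auto
next
  case False
  then have "\<forall>a\<in>Q. c a = c' a" using assms(1) by auto
  then show ?thesis by (rule awI1)
qed

lemma aw_double:
  assumes "\<forall>j. j \<noteq> x \<and> j \<noteq> y \<longrightarrow> c' j = c j" "c x \<noteq> c y" "c' x \<noteq> c' y"
    "x \<in> Q \<longrightarrow> (\<exists>a\<in>Q-{x}. \<exists>b\<in>Q-{x}. c a \<noteq> c b)"
    "y \<in> Q \<longrightarrow> (\<exists>a\<in>Q-{y}. \<exists>b\<in>Q-{y}. c a \<noteq> c b)"
  shows "aw c c' Q"
proof (cases "x \<in> Q \<and> y \<in> Q")
  case True
  then show ?thesis using assms(2,3) by (intro awI2[of x Q y]) auto
next
  case F: False
  show ?thesis
  proof (cases "x \<in> Q")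
    case True
    then obtain a b where ab: "a\<in>Q" "a \<noteq> x" "b\<in>Q" "b \<noteq> x" "c a \<noteq> c b" using assms(4) by blast
    moreover have "y \<notin> Q" using F True by blast
    ultimately have "c' a = c a" "c' b = c b" using assms(1) by auto
    then show ?thesis using ab by (intro awI2[of a Q b]) auto
  next
    case False
    show ?thesis
    proof (cases "y \<in> Q")
      case True
      then obtain a b where ab: "a\<in>Q" "a \<noteq> y" "b\<in>Q" "b \<noteq> y" "c a \<noteq> c b" using assms(5) by blast
      moreover have "x \<notin> Q" using False by blast
      ultimately have "c' a = c a" "c' b = c b" using assms(1) by auto
      then show ?thesis using ab by (intro awI2[of a Q b]) auto
    next
      case False
      then have "\<forall>a\<in>Q. c a = c' a" using assms(1) \<open>x \<notin> Q\<close> by auto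
      then show ?thesis by (rule awI1)
    qed
  qed
qed

lemma aw3_I:
  assumes "\<forall>j. j \<noteq> x \<and> j \<noteq> y \<longrightarrow> c2 j = c1 j \<and> c3 j = c1 j"
    "(x \<in> Q \<or> y \<in> Q) \<longrightarrow> (\<exists>a\<in>Q-{x,y}. \<exists>b\<in>Q-{x,y}. c1 a \<noteq> c1 b)"
  shows "aw3 c1 c2 c3 Q"
proof (cases "x \<in> Q \<or> y \<in> Q")
  case True
  then obtain a b where ab: "a\<in>Q" "a \<noteq> x" "a \<noteq> y" "b\<in>Q" "b \<noteq> x" "b \<noteq> y" "c1 a \<noteq> c1 b" using assms(2) by blast
  then have "c2 a = c1 a" "c2 b = c1 b" "c3 a = c1 a" "c3 b = c1 b" using assms(1) by auto
  then have "\<exists>a\<in>Q. \<exists>b\<in>Q. c1 a \<noteq> c1 b \<and> c2 a \<noteq> c2 b \<and> c3 a \<noteq> c3 b" using ab by auto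
  then show ?thesis unfolding aw3_def by blast
next
  case False
  then have "\<forall>a\<in>Q. c1 a = c2 a \<and> c1 a = c3 a" using assms(1) by auto
  then show ?thesis unfolding aw3_def by blast
qed



lemma pair_sum:
  fixes h :: "nat \<Rightarrow> nat"
  assumes "finite S" "\<forall>x\<in>S. \<forall>y\<in>S. x \<noteq> y \<longrightarrow> m \<le> h x + h y"
  shows "(card S - 1) * m \<le> 2 * sum h S"
  using assms
proof (induction "card S" arbitrary: S rule: less_induct)
  case less
  show ?case
  proof (cases "card S \<le> 1")
    case True
    then show ?thesis by simp
  next
    case False
    then have "S \<noteq> {}" by auto
    then obtain x where x: "x \<in> S" by blast
    have "card (S - {x}) \<ge> 1" using False x less.prems(1) by simp
    then have "card (S - {x}) > 0" by simp
    then have "S - {x} \<noteq> {}" using card_gt_0_iff by blast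
    then obtain y where y: "y \<in> S - {x}" by blast
    define S' where "S' = S - {x, y}"
    have cS': "card S' = card S - 2" unfolding S'_def using x y less.prems(1) by (simp add: card_Diff_subset)
    have fS': "finite S'" using less.prems(1) S'_def by simp
    have IH: "(card S' - 1) * m \<le> 2 * sum h S'"
    proof -
      have lt: "card S' < card S" using cS' False by simp
      have pr: "\<forall>x\<in>S'. \<forall>y\<in>S'. x \<noteq> y \<longrightarrow> m \<le> h x + h y" using less.prems(2) unfolding S'_def by blast
      show ?thesis by (rule less.hyps[OF lt fS' pr])
    qed
    have "sum h S = h x + h y + sum h S'"
    proof -
      have "S = insert x (insert y S')" using x y S'_def by auto
      then have "sum h S = sum h (insert x (insert y S'))" by (rule arg_cong)
      also have "\<dots> = h x + h y + sum h S'" using x y S'_def fS' by simp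
      finally show ?thesis .
    qed
    moreover have "m \<le> h x + h y"
    proof -
      have "y \<in> S" "x \<noteq> y" using y by auto
      then show ?thesis using less.prems(2) x by simp
    qed
    moreover have "(card S - 1) * m \<le> 2 * m + (card S' - 1) * m"
    proof -
      have "card S - 1 \<le> 2 + (card S' - 1)" using cS' by simp
      then have "(card S - 1) * m \<le> (2 + (card S' - 1)) * m" by (rule mult_right_mono) simp
      then show ?thesis by (simp add: algebra_simps)
    qed
    ultimately show ?thesis using IH by linarith
  qed
qed



lemma bm_adm_gm: "bm_adm c Q a \<Longrightarrow> gm_ans c Q = (a \<noteq> None)"
  unfolding bm_adm_def gm_ans_def by auto

lemma determined_mono: "determined n S \<Longrightarrow> T \<subseteq> S \<Longrightarrow> determined n T"
  unfolding determined_def by blast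

lemma gm_to_bm:
  assumes "gm_success n Qs" shows "bm_success n Qs"
  unfolding bm_success_def
proof (intro allI impI)
  fix c As
  assume h: "length As = length Qs \<and> (\<forall>i<length Qs. bm_adm c (Qs ! i) (As ! i))"
  have "{c'. \<forall>i<length Qs. bm_adm c' (Qs ! i) (As ! i)} \<subseteq> {c'. \<forall>Q\<in>set Qs. gm_ans c' Q = gm_ans c Q}"
  proof (intro subsetI CollectI ballI)
    fix c' Q
    assume c': "c' \<in> {c'. \<forall>i<length Qs. bm_adm c' (Qs ! i) (As ! i)}" and "Q \<in> set Qs"
    then obtain i where i: "i < length Qs" "Q = Qs ! i" by (metis in_set_conv_nth)
    have "gm_ans c' Q = (As ! i \<noteq> None)" using c' i bm_adm_gm by auto
    moreover have "gm_ans c Q = (As ! i \<noteq> None)" using h i bm_adm_gm by auto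
    ultimately show "gm_ans c' Q = gm_ans c Q" by simp
  qed
  moreover have "determined n {c'. \<forall>Q\<in>set Qs. gm_ans c' Q = gm_ans c Q}"
    using assms unfolding gm_success_def by blast
  ultimately show "determined n {c'. \<forall>i<length Qs. bm_adm c' (Qs ! i) (As ! i)}"
    using determined_mono by blast
qed

lemma gm_insert:
  assumes "T \<noteq> {}" "\<forall>a\<in>T. g a = v"
  shows "gm_ans g (insert j T) = (g j \<noteq> v)"
proof -
  obtain t where t: "t \<in> T" using assms(1) by blast
  show ?thesis
  proof
    assume "gm_ans g (insert j T)"
    then obtain a b where ab: "a \<in> insert j T" "b \<in> insert j T" "g a \<noteq> g b" unfolding gm_ans_def by meson
    show "g j \<noteq> v"
    proof
      assume "g j = v"
      then have "g a = v" "g b = v" using ab(1,2) assms(2) by auto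
      then show False using ab(3) by simp
    qed
  next
    assume "g j \<noteq> v"
    then have "g j \<noteq> g t" using t assms(2) by simp
    then show "gm_ans g (insert j T)" unfolding gm_ans_def using t by blast
  qed
qed

lemma bool_eq3: "((p::bool) = q) = ((p = r) = (q = r))"
  by (cases p; cases q; cases r) auto

lemma gm_exists:
  assumes "k \<ge> 2" "2 * k \<le> n"
  shows "\<exists>Qs. valid_strategy n k Qs \<and> gm_success n Qs"
proof -
  define F where "F = {Q. Q \<subseteq> {1..n} \<and> card Q = k}"
  have "finite F" unfolding F_def by (rule finite_subset[of _ "Pow {1..n}"]) auto
  then obtain Qs where sQ: "set Qs = F" using finite_list by blast
  have valid: "valid_strategy n k Qs" unfolding valid_strategy_def sQ F_def by auto
  have "gm_success n Qs" unfolding gm_success_def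
  proof
    fix c :: "nat \<Rightarrow> bool"
    define S where "S = {c'. \<forall>Q\<in>set Qs. gm_ans c' Q = gm_ans c Q}"
    define Tr where "Tr = {j\<in>{1..n}. c j}"
    define Fl where "Fl = {j\<in>{1..n}. \<not> c j}"
    have "card Tr + card Fl = card (Tr \<union> Fl)" unfolding Tr_def Fl_def by (intro card_Un_disjoint[symmetric]) auto
    also have "Tr \<union> Fl = {1..n}" unfolding Tr_def Fl_def by auto
    finally have "card Tr + card Fl = n" by simp
    then have "k \<le> card Tr \<or> k \<le> card Fl" using assms by linarith
    then obtain T0 v where T0: "T0 \<subseteq> {1..n}" "card T0 = k" "finite T0" "\<forall>a\<in>T0. c a = v"
    proof
      assume "k \<le> card Tr"
      then obtain T where "T \<subseteq> Tr" "card T = k" "finite T" by (rule obtain_subset_with_card_n)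
      then have "T \<subseteq> {1..n}" "\<forall>a\<in>T. c a = True" "card T = k" "finite T" unfolding Tr_def by auto
      then show ?thesis by (intro that[of T True])
    next
      assume "k \<le> card Fl"
      then obtain T where "T \<subseteq> Fl" "card T = k" "finite T" by (rule obtain_subset_with_card_n)
      then have "T \<subseteq> {1..n}" "\<forall>a\<in>T. c a = False" "card T = k" "finite T" unfolding Fl_def by auto
      then show ?thesis by (intro that[of T False])
    qed
    have "T0 \<noteq> {}" using T0(2) assms(1) by auto
    then obtain t0 where t0: "t0 \<in> T0" by blast
    have T0F: "T0 \<in> set Qs" unfolding sQ F_def using T0 by auto
    have key: "(c' j = c' t0) = (c j = c t0)" if c': "c' \<in> S" and j: "j \<in> {1..n}" for c' j
    proof -
      have "\<not> gm_ans c T0" using T0(4) unfolding gm_ans_def by auto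
      then have "\<not> gm_ans c' T0" using c' T0F unfolding S_def by auto
      have cT0: "\<forall>a\<in>T0. c' a = c' t0"
      proof
        fix a assume a: "a \<in> T0"
        show "c' a = c' t0"
        proof (rule ccontr)
          assume "c' a \<noteq> c' t0"
          then have "gm_ans c' T0" unfolding gm_ans_def using a t0 by blast
          then show False using \<open>\<not> gm_ans c' T0\<close> by simp
        qed
      qed
      have cT0': "\<forall>a\<in>T0. c a = c t0" using T0(4) t0 by auto
      have "k - 1 \<le> card (T0 - {j})" using T0(2) diff_card_le_card_Diff[where A=T0 and B="{j}"] by simp
      then obtain T where T: "T \<subseteq> T0 - {j}" "card T = k - 1" "finite T" by (rule obtain_subset_with_card_n)
      have Tne: "T \<noteq> {}" using T(2) assms(1) by auto
      have "j \<notin> T" using T(1) by auto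
      then have "card (insert j T) = k" using T assms(1) by simp
      moreover have "insert j T \<subseteq> {1..n}" using T(1) T0(1) j by auto
      ultimately have QF: "insert j T \<in> set Qs" unfolding sQ F_def by auto
      have g1: "gm_ans c' (insert j T) = (c' j \<noteq> c' t0)" using gm_insert[OF Tne, of c' "c' t0" j] cT0 T(1) by auto
      have g2: "gm_ans c (insert j T) = (c j \<noteq> c t0)" using gm_insert[OF Tne, of c "c t0" j] cT0' T(1) by auto
      have g3: "gm_ans c' (insert j T) = gm_ans c (insert j T)" using c' QF unfolding S_def by auto
      have "(c' j \<noteq> c' t0) = (c j \<noteq> c t0)" using g1 g2 g3 by (simp only:)
      then show ?thesis by (cases "c j"; cases "c t0"; cases "c' j"; cases "c' t0") auto
    qed
    have majeq: "majority n c' i = majority n c i" if c': "c' \<in> S" for c' i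
    proof (cases "i \<in> {1..n}")
      case True
      have "{j\<in>{1..n}. c' j = c' i} = {j\<in>{1..n}. c j = c i}"
      proof (intro Collect_cong conj_cong refl)
        fix j assume "j \<in> {1..n}"
        then show "(c' j = c' i) = (c j = c i)"
          using key[OF c'] True bool_eq3[of "c' j" "c' i" "c' t0"] bool_eq3[of "c j" "c i" "c t0"] by simp
      qed
      then show ?thesis unfolding majority_def by simp
    next
      case False
      then show ?thesis unfolding majority_def by auto
    qed
    show "determined n S"
    proof (cases "\<exists>i. majority n c i")
      case True
      then obtain i where i: "majority n c i" by blast
      then have "i \<in> {1..n}" unfolding majority_def by simp
      moreover have "\<forall>c'\<in>S. majority n c' i" using majeq i by blast
      ultimately show ?thesis unfolding determined_def by blast
    next
      case False
      then show ?thesis unfolding determined_def using majeq by blast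
    qed
  qed
  then show ?thesis using valid by blast
qed



lemma query_facts:
  assumes "valid_strategy n k Qs" "Q \<in> set Qs" "k \<ge> 1"
  shows "Q \<subseteq> {1..n}" "card Q = k" "finite Q"
  using assms unfolding valid_strategy_def by (auto intro: card_ge_0_finite)

lemma even_fail:
  assumes valid: "valid_strategy n k Qs" and k: "k \<ge> 3" and ev: "even n" and x: "x \<in> {1..n}"
    and h: "hc Qs x < mB (k-1)" and big: "(k-1) * mB (k-1) + 1 \<le> n div 2"
  shows "\<not> gm_success n Qs \<and> \<not> bm_success n Qs"
proof -
  define F where "F = {Q \<in> set Qs. x \<in> Q}"
  define E where "E = (\<lambda>Q. Q - {x}) ` F"
  have fF: "finite F" unfolding F_def by simp
  have fE: "finite E" unfolding E_def using fF by simp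
  have "card E \<le> card F" unfolding E_def using fF by (rule card_image_le)
  then have cE: "card E < mB (k-1)" using h unfolding hc_def F_def by simp
  have eE: "\<forall>e\<in>E. e \<subseteq> {1..n} \<and> card e = k-1"
  proof
    fix e assume "e \<in> E"
    then obtain Q where Q: "Q \<in> F" "e = Q - {x}" unfolding E_def by blast
    then have "Q \<in> set Qs" "x \<in> Q" unfolding F_def by auto
    then show "e \<subseteq> {1..n} \<and> card e = k-1" using query_facts[OF valid, of Q] k Q(2) by auto
  qed
  have n2: "n = 2 * (n div 2)" using ev by presburger
  obtain A where A: "A \<subseteq> {1..n}" "card A = n div 2" "x \<in> A" "\<forall>e\<in>E. \<exists>a\<in>e. \<exists>b\<in>e. (a \<in> A) \<noteq> (b \<in> A)"
    using realize[OF fE eE cE x, of "n div 2"] big n2 by auto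
  define c1 where "c1 = (\<lambda>j. j \<in> A)"
  define c2 where "c2 = (\<lambda>j. j \<in> A - {x})"
  have good: "x \<in> Q \<longrightarrow> (\<exists>a\<in>Q-{x}. \<exists>b\<in>Q-{x}. c1 a \<noteq> c1 b)" if "Q \<in> set Qs" for Q
  proof
    assume "x \<in> Q"
    then have "Q - {x} \<in> E" unfolding E_def F_def using that by auto
    then show "\<exists>a\<in>Q-{x}. \<exists>b\<in>Q-{x}. c1 a \<noteq> c1 b" using A(4) unfolding c1_def by meson
  qed
  have off: "\<forall>j. j \<noteq> x \<longrightarrow> c2 j = c1 j" unfolding c1_def c2_def by auto
  have aw: "\<forall>Q\<in>set Qs. aw c1 c2 Q \<and> aw c1 c2 Q" using aw_single[OF off] good by blast
  have aw3: "\<forall>Q\<in>set Qs. aw3 c1 c2 c2 Q"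
  proof
    fix Q assume "Q \<in> set Qs"
    then have "(x \<in> Q \<or> x \<in> Q) \<longrightarrow> (\<exists>a\<in>Q-{x,x}. \<exists>b\<in>Q-{x,x}. c1 a \<noteq> c1 b)" using good by simp
    moreover have "\<forall>j. j \<noteq> x \<and> j \<noteq> x \<longrightarrow> c2 j = c1 j \<and> c2 j = c1 j" using off by blast
    ultimately show "aw3 c1 c2 c2 Q" using aw3_I by blast
  qed
  have m1: "\<forall>i. \<not> majority n c1 i" and m2: "majority n c2 x"
    using even_maj[OF ev A(1) A(2) A(3)] unfolding c1_def c2_def by auto
  have mm: "\<forall>i. \<not>(majority n c1 i \<and> majority n c2 i \<and> majority n c2 i)" using m1 by blast
  have me: "\<exists>i. majority n c1 i \<or> majority n c2 i \<or> majority n c2 i" using m2 by blast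
  show ?thesis using gm_fail[OF aw mm me] bm_fail[OF aw3 mm me] by blast
qed

lemma odd_from_A:
  assumes odd: "odd n" and A: "A \<subseteq> {1..n}" "card A = n div 2 + 1" "x \<in> A" and y: "y \<in> {1..n}" "x \<noteq> y"
  shows "(\<forall>Q\<in>set Qs. (x \<in> Q \<longrightarrow> (\<exists>a\<in>Q-{x}. \<exists>b\<in>Q-{x}. (a \<in> A) \<noteq> (b \<in> A))) \<and>
                      (y \<in> Q \<longrightarrow> (\<exists>a\<in>Q-{y}. \<exists>b\<in>Q-{y}. (a \<in> A) \<noteq> (b \<in> A)))) \<Longrightarrow> \<not> gm_success n Qs"
    and "(\<forall>Q\<in>set Qs. (x \<in> Q \<or> y \<in> Q) \<longrightarrow> (\<exists>a\<in>Q-{x,y}. \<exists>b\<in>Q-{x,y}. (a \<in> A) \<noteq> (b \<in> A))) \<Longrightarrow> \<not> bm_success n Qs"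
proof -
  define B where "B = (if y \<in> A then A - {y} else insert y (A - {x}))"
  define c1 where "c1 = (\<lambda>j. j \<in> A)"
  define c2 where "c2 = (\<lambda>j. j \<in> A - {x})"
  define c3 where "c3 = (\<lambda>j. j \<in> B)"
  have mm: "\<forall>i. \<not>(majority n c1 i \<and> majority n c2 i \<and> majority n c3 i)"
    and me: "\<exists>i. majority n c1 i \<or> majority n c2 i \<or> majority n c3 i"
    using odd_maj[OF odd A y] unfolding c1_def c2_def c3_def B_def by auto
  have off2: "\<forall>j. j \<noteq> x \<longrightarrow> c2 j = c1 j" unfolding c1_def c2_def by auto
  have off3: "\<forall>j. j \<noteq> x \<and> j \<noteq> y \<longrightarrow> c2 j = c1 j \<and> c3 j = c1 j" unfolding c1_def c2_def c3_def B_def by auto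
  {
    assume g: "\<forall>Q\<in>set Qs. (x \<in> Q \<longrightarrow> (\<exists>a\<in>Q-{x}. \<exists>b\<in>Q-{x}. (a \<in> A) \<noteq> (b \<in> A))) \<and>
                      (y \<in> Q \<longrightarrow> (\<exists>a\<in>Q-{y}. \<exists>b\<in>Q-{y}. (a \<in> A) \<noteq> (b \<in> A)))"
    have "\<forall>Q\<in>set Qs. aw c1 c2 Q \<and> aw c1 c3 Q"
    proof
      fix Q assume Q: "Q \<in> set Qs"
      have gx: "x \<in> Q \<longrightarrow> (\<exists>a\<in>Q-{x}. \<exists>b\<in>Q-{x}. c1 a \<noteq> c1 b)" using g Q unfolding c1_def by blast
      have gy: "y \<in> Q \<longrightarrow> (\<exists>a\<in>Q-{y}. \<exists>b\<in>Q-{y}. c1 a \<noteq> c1 b)" using g Q unfolding c1_def by blast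
      have "aw c1 c2 Q" using aw_single[OF off2 gx] .
      moreover have "aw c1 c3 Q"
      proof (cases "y \<in> A")
        case True
        have "\<forall>j. j \<noteq> y \<longrightarrow> c3 j = c1 j" unfolding c1_def c3_def B_def using True by auto
        then show ?thesis using aw_single gy by blast
      next
        case False
        have o: "\<forall>j. j \<noteq> x \<and> j \<noteq> y \<longrightarrow> c3 j = c1 j" using off3 by blast
        have "c1 x \<noteq> c1 y" unfolding c1_def using False A(3) by simp
        moreover have "c3 x \<noteq> c3 y" unfolding c3_def B_def using False y(2) by simp
        ultimately show ?thesis using aw_double[OF o _ _ gx gy] by blast
      qed
      ultimately show "aw c1 c2 Q \<and> aw c1 c3 Q" by blast
    qed
    then show "\<not> gm_success n Qs" using gm_fail[OF _ mm me] by blast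
  }
  {
    assume g: "\<forall>Q\<in>set Qs. (x \<in> Q \<or> y \<in> Q) \<longrightarrow> (\<exists>a\<in>Q-{x,y}. \<exists>b\<in>Q-{x,y}. (a \<in> A) \<noteq> (b \<in> A))"
    have "\<forall>Q\<in>set Qs. aw3 c1 c2 c3 Q"
    proof
      fix Q assume Q: "Q \<in> set Qs"
      have "(x \<in> Q \<or> y \<in> Q) \<longrightarrow> (\<exists>a\<in>Q-{x,y}. \<exists>b\<in>Q-{x,y}. c1 a \<noteq> c1 b)" using g Q unfolding c1_def by blast
      then show "aw3 c1 c2 c3 Q" using aw3_I[OF off3] by blast
    qed
    then show "\<not> bm_success n Qs" using bm_fail[OF _ mm me] by blast
  }
qed

lemma odd_gm_fail:
  assumes valid: "valid_strategy n k Qs" and k: "k \<ge> 3" and od: "odd n" and x: "x \<in> {1..n}"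
    and y: "y \<in> {1..n}" "x \<noteq> y"
    and h: "hc Qs x + hc Qs y < mB (k-1)" and big: "(k-1) * mB (k-1) + 1 \<le> n div 2"
  shows "\<not> gm_success n Qs"
proof -
  define F1 where "F1 = {Q \<in> set Qs. x \<in> Q}"
  define F2 where "F2 = {Q \<in> set Qs. y \<in> Q}"
  define E where "E = (\<lambda>Q. Q - {x}) ` F1 \<union> (\<lambda>Q. Q - {y}) ` F2"
  have fF: "finite F1" "finite F2" unfolding F1_def F2_def by simp_all
  have fE: "finite E" unfolding E_def using fF by simp
  have "card E \<le> card ((\<lambda>Q. Q - {x}) ` F1) + card ((\<lambda>Q. Q - {y}) ` F2)" unfolding E_def by (rule card_Un_le)
  also have "\<dots> \<le> card F1 + card F2" using card_image_le[OF fF(1)] card_image_le[OF fF(2)] by (rule add_mono)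
  finally have cE: "card E < mB (k-1)" using h unfolding hc_def F1_def F2_def by simp
  have eE: "\<forall>e\<in>E. e \<subseteq> {1..n} \<and> card e = k-1"
  proof
    fix e assume "e \<in> E"
    then obtain Q z where Q: "Q \<in> set Qs" "z \<in> Q" "e = Q - {z}" unfolding E_def F1_def F2_def by blast
    then show "e \<subseteq> {1..n} \<and> card e = k-1" using query_facts[OF valid, of Q] k by auto
  qed
  have n2: "n = 2 * (n div 2) + 1" using od by presburger
  obtain A where A: "A \<subseteq> {1..n}" "card A = n div 2 + 1" "x \<in> A" "\<forall>e\<in>E. \<exists>a\<in>e. \<exists>b\<in>e. (a \<in> A) \<noteq> (b \<in> A)"
    using realize[OF fE eE cE x, of "n div 2 + 1"] big n2 by auto
  have "\<forall>Q\<in>set Qs. (x \<in> Q \<longrightarrow> (\<exists>a\<in>Q-{x}. \<exists>b\<in>Q-{x}. (a \<in> A) \<noteq> (b \<in> A))) \<and>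
                      (y \<in> Q \<longrightarrow> (\<exists>a\<in>Q-{y}. \<exists>b\<in>Q-{y}. (a \<in> A) \<noteq> (b \<in> A)))"
  proof (intro ballI conjI impI)
    fix Q assume "Q \<in> set Qs" "x \<in> Q"
    then have "Q - {x} \<in> E" unfolding E_def F1_def by auto
    then show "\<exists>a\<in>Q-{x}. \<exists>b\<in>Q-{x}. (a \<in> A) \<noteq> (b \<in> A)" using A(4) by meson
  next
    fix Q assume "Q \<in> set Qs" "y \<in> Q"
    then have "Q - {y} \<in> E" unfolding E_def F2_def by auto
    then show "\<exists>a\<in>Q-{y}. \<exists>b\<in>Q-{y}. (a \<in> A) \<noteq> (b \<in> A)" using A(4) by meson
  qed
  then show ?thesis using odd_from_A(1)[OF od A(1-3) y] by blast
qed

lemma odd_bm_fail: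
  assumes valid: "valid_strategy n k Qs" and k: "k \<ge> 3" and od: "odd n" and x: "x \<in> {1..n}"
    and y: "y \<in> {1..n}" "x \<noteq> y"
    and h: "hc Qs x + hc Qs y < mB (k-2)" and big: "(k-2) * mB (k-2) + 1 \<le> n div 2"
  shows "\<not> bm_success n Qs"
proof -
  define F1 where "F1 = {Q \<in> set Qs. x \<in> Q}"
  define F2 where "F2 = {Q \<in> set Qs. y \<in> Q}"
  define sel where "sel Q = (SOME T. T \<subseteq> Q - {x,y} \<and> card T = k-2)" for Q
  define E where "E = sel ` (F1 \<union> F2)"
  have fF: "finite F1" "finite F2" unfolding F1_def F2_def by simp_all
  have fE: "finite E" unfolding E_def using fF by simp
  have "card E \<le> card (F1 \<union> F2)" unfolding E_def using fF by (intro card_image_le) simp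
  also have "\<dots> \<le> card F1 + card F2" by (rule card_Un_le)
  finally have cE: "card E < mB (k-2)" using h unfolding hc_def F1_def F2_def by simp
  have selp: "sel Q \<subseteq> Q - {x,y} \<and> card (sel Q) = k-2" if Q: "Q \<in> set Qs" for Q
  proof -
    have "card Q = k" "finite Q" using query_facts[OF valid Q] k by auto
    moreover have "card {x,y} = 2" using y(2) by simp
    ultimately have "k - 2 \<le> card (Q - {x,y})" using diff_card_le_card_Diff[where A=Q and B="{x,y}"] by simp
    then obtain T where "T \<subseteq> Q - {x,y}" "card T = k-2" by (rule obtain_subset_with_card_n)
    then have "\<exists>T. T \<subseteq> Q - {x,y} \<and> card T = k-2" by blast
    then show ?thesis unfolding sel_def by (rule someI_ex)
  qed
  have eE: "\<forall>e\<in>E. e \<subseteq> {1..n} \<and> card e = k-2"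
  proof
    fix e assume "e \<in> E"
    then obtain Q where Q: "Q \<in> set Qs" "e = sel Q" unfolding E_def F1_def F2_def by blast
    then show "e \<subseteq> {1..n} \<and> card e = k-2" using query_facts[OF valid Q(1)] selp[OF Q(1)] k by auto
  qed
  have n2: "n = 2 * (n div 2) + 1" using od by presburger
  obtain A where A: "A \<subseteq> {1..n}" "card A = n div 2 + 1" "x \<in> A" "\<forall>e\<in>E. \<exists>a\<in>e. \<exists>b\<in>e. (a \<in> A) \<noteq> (b \<in> A)"
    using realize[OF fE eE cE x, of "n div 2 + 1"] big n2 by auto
  have "\<forall>Q\<in>set Qs. (x \<in> Q \<or> y \<in> Q) \<longrightarrow> (\<exists>a\<in>Q-{x,y}. \<exists>b\<in>Q-{x,y}. (a \<in> A) \<noteq> (b \<in> A))"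
  proof (intro ballI impI)
    fix Q assume Q: "Q \<in> set Qs" "x \<in> Q \<or> y \<in> Q"
    then have "sel Q \<in> E" unfolding E_def F1_def F2_def by auto
    then obtain a b where ab: "a \<in> sel Q" "b \<in> sel Q" "(a \<in> A) \<noteq> (b \<in> A)" using A(4) by meson
    then have "a \<in> Q-{x,y}" "b \<in> Q-{x,y}" using selp[OF Q(1)] by auto
    then show "\<exists>a\<in>Q-{x,y}. \<exists>b\<in>Q-{x,y}. (a \<in> A) \<noteq> (b \<in> A)" using ab(3) by meson
  qed
  then show ?thesis using odd_from_A(2)[OF od A(1-3) y] by blast
qed



lemma real_bound:
  assumes "(a::nat) * m \<le> d * N" "d > 0"
  shows "real a / real d * real m \<le> real N"
proof -
  have "real a * real m \<le> real d * real N" using assms(1) by (metis of_nat_le_iff of_nat_mult)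
  then show ?thesis using assms(2) by (simp add: field_simps)
qed

lemma strat_facts:
  assumes k2: "k \<ge> 2" and nk: "2 * k \<le> n"
  shows "\<exists>Qg Qb. length Qg = N_GM k n \<and> valid_strategy n k Qg \<and> gm_success n Qg \<and>
     length Qb = N_BM k n \<and> valid_strategy n k Qb \<and> bm_success n Qb \<and> N_BM k n \<le> N_GM k n"
proof -
  define PG where "PG q = (\<exists>Qs. length Qs = q \<and> valid_strategy n k Qs \<and> gm_success n Qs)" for q
  define PB where "PB q = (\<exists>Qs. length Qs = q \<and> valid_strategy n k Qs \<and> bm_success n Qs)" for q
  obtain Q0 where Q0: "valid_strategy n k Q0" "gm_success n Q0" using gm_exists[OF k2 nk] by blast
  have "PG (length Q0)" unfolding PG_def using Q0 by blast
  then have "PG (N_GM k n)" unfolding N_GM_def PG_def[symmetric] by (rule LeastI)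
  then obtain Qg where Qg: "length Qg = N_GM k n" "valid_strategy n k Qg" "gm_success n Qg"
    unfolding PG_def by blast
  have "PB (length Q0)" unfolding PB_def using Q0 gm_to_bm by blast
  then have "PB (N_BM k n)" unfolding N_BM_def PB_def[symmetric] by (rule LeastI)
  then obtain Qb where Qb: "length Qb = N_BM k n" "valid_strategy n k Qb" "bm_success n Qb"
    unfolding PB_def by blast
  have "PB (length Qg)" unfolding PB_def using Qg gm_to_bm by blast
  then have "N_BM k n \<le> length Qg" unfolding N_BM_def PB_def[symmetric] by (rule Least_le)
  then have "N_BM k n \<le> N_GM k n" using Qg(1) by simp
  then show ?thesis using Qg Qb by blast
qed

lemma even_bound:
  assumes v: "valid_strategy n k Qb" and b: "bm_success n Qb" and k: "k \<ge> 3" and ev: "even n"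
    and big: "(k-1) * mB (k-1) + 1 \<le> n div 2"
  shows "n * mB (k-1) \<le> k * length Qb"
proof -
  have hx: "mB (k-1) \<le> hc Qb x" if x: "x \<in> {1..n}" for x
  proof (rule ccontr)
    assume "\<not> mB (k-1) \<le> hc Qb x"
    then have "hc Qb x < mB (k-1)" by simp
    then show False using even_fail[OF v k ev x _ big] b by blast
  qed
  have "n * mB (k-1) \<le> (\<Sum>x\<in>{1..n}. hc Qb x)" using sum_bounded_below[of "{1..n}" "mB (k-1)" "hc Qb"] hx by simp
  also have "\<dots> \<le> k * length Qb" using sum_hc[OF v] by simp
  finally show ?thesis .
qed

lemma odd_gm_bound:
  assumes v: "valid_strategy n k Qg" and g: "gm_success n Qg" and k: "k \<ge> 3" and od: "odd n"
    and big: "(k-1) * mB (k-1) + 1 \<le> n div 2"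
  shows "(n - 1) * mB (k-1) \<le> (2 * k) * length Qg"
proof -
  have hp: "\<forall>x\<in>{1..n}. \<forall>y\<in>{1..n}. x \<noteq> y \<longrightarrow> mB (k-1) \<le> hc Qg x + hc Qg y"
  proof (intro ballI impI)
    fix x y assume x: "x \<in> {1..n}" and y: "y \<in> {1..n}" and xy: "x \<noteq> y"
    show "mB (k-1) \<le> hc Qg x + hc Qg y"
    proof (rule ccontr)
      assume "\<not> mB (k-1) \<le> hc Qg x + hc Qg y"
      then have "hc Qg x + hc Qg y < mB (k-1)" by simp
      then show False using odd_gm_fail[OF v k od x y xy _ big] g by blast
    qed
  qed
  have "(n - 1) * mB (k-1) \<le> 2 * (\<Sum>x\<in>{1..n}. hc Qg x)" using pair_sum[OF _ hp] by simp
  also have "\<dots> \<le> 2 * (k * length Qg)" using sum_hc[OF v] by simp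
  finally show ?thesis by simp
qed

lemma odd_bm_bound:
  assumes v: "valid_strategy n k Qb" and b: "bm_success n Qb" and k: "k \<ge> 3" and od: "odd n"
    and big: "(k-2) * mB (k-2) + 1 \<le> n div 2"
  shows "(n - 1) * mB (k-2) \<le> (2 * k) * length Qb"
proof -
  have hp: "\<forall>x\<in>{1..n}. \<forall>y\<in>{1..n}. x \<noteq> y \<longrightarrow> mB (k-2) \<le> hc Qb x + hc Qb y"
  proof (intro ballI impI)
    fix x y assume x: "x \<in> {1..n}" and y: "y \<in> {1..n}" and xy: "x \<noteq> y"
    show "mB (k-2) \<le> hc Qb x + hc Qb y"
    proof (rule ccontr)
      assume "\<not> mB (k-2) \<le> hc Qb x + hc Qb y"
      then have "hc Qb x + hc Qb y < mB (k-2)" by simp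
      then show False using odd_bm_fail[OF v k od x y xy _ big] b by blast
    qed
  qed
  have "(n - 1) * mB (k-2) \<le> 2 * (\<Sum>x\<in>{1..n}. hc Qb x)" using pair_sum[OF _ hp] by simp
  also have "\<dots> \<le> 2 * (k * length Qb)" using sum_hc[OF v] by simp
  finally show ?thesis by simp
qed

lemma main_n:
  assumes k: "k \<ge> 3" and n0: "2 * (k * mB (k-1) + k * mB (k-2) + 2 * k + 5) \<le> n"
  shows "(even n \<longrightarrow> f n k * real (mB (k - 1)) \<le> real (N_BM k n) \<and> N_BM k n \<le> N_GM k n) \<and>
    (odd n \<longrightarrow> f n k * real (mB (k - 1)) \<le> real (N_GM k n) \<and>
                f n k * real (mB (k - 2)) \<le> real (N_BM k n))"
proof -
  have k1: "(k-1) * mB (k-1) \<le> k * mB (k-1)" "(k-2) * mB (k-2) \<le> k * mB (k-2)" by (simp_all add: mult_le_mono1)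
  have dv: "\<And>M. 2 * M \<le> n \<Longrightarrow> M \<le> n div 2" by presburger
  have nd: "k * mB (k-1) + k * mB (k-2) + 2 * k + 5 \<le> n div 2" by (rule dv[OF n0])
  have big1: "(k-1) * mB (k-1) + 1 \<le> n div 2" using nd k1 by linarith
  have big2: "(k-2) * mB (k-2) + 1 \<le> n div 2" using nd k1 by linarith
  have "n div 2 \<le> n" by simp
  then have nk: "2 * k \<le> n" and n1: "n \<ge> 1" using nd by linarith+
  have k2: "k \<ge> 2" using k by simp
  have kpos: "k > 0" using k by simp
  obtain Qg Qb where Qg: "length Qg = N_GM k n" "valid_strategy n k Qg" "gm_success n Qg"
    and Qb: "length Qb = N_BM k n" "valid_strategy n k Qb" "bm_success n Qb" and le: "N_BM k n \<le> N_GM k n"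
    using strat_facts[OF k2 nk] by blast
  have E1: "even n \<Longrightarrow> f n k * real (mB (k - 1)) \<le> real (N_BM k n)"
  proof -
    assume ev: "even n"
    have "n * mB (k-1) \<le> k * N_BM k n" using even_bound[OF Qb(2,3) k ev big1] Qb(1) by simp
    then have "real n / real k * real (mB (k-1)) \<le> real (N_BM k n)" by (rule real_bound) (use kpos in simp)
    then show ?thesis using ev unfolding f_def by simp
  qed
  have fn_odd: "odd n \<Longrightarrow> f n k = real (n - 1) / real (2 * k)"
  proof -
    assume "odd n"
    with n1 show ?thesis unfolding f_def by (simp add: of_nat_diff)
  qed
  have O1: "odd n \<Longrightarrow> f n k * real (mB (k - 1)) \<le> real (N_GM k n)"
  proof -
    assume od: "odd n"
    have "(n - 1) * mB (k-1) \<le> (2 * k) * N_GM k n" using odd_gm_bound[OF Qg(2,3) k od big1] Qg(1) by simp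
    then have "real (n - 1) / real (2 * k) * real (mB (k-1)) \<le> real (N_GM k n)" by (rule real_bound) (use kpos in simp)
    then show ?thesis using fn_odd[OF od] by simp
  qed
  have O2: "odd n \<Longrightarrow> f n k * real (mB (k - 2)) \<le> real (N_BM k n)"
  proof -
    assume od: "odd n"
    have "(n - 1) * mB (k-2) \<le> (2 * k) * N_BM k n" using odd_bm_bound[OF Qb(2,3) k od big2] Qb(1) by simp
    then have "real (n - 1) / real (2 * k) * real (mB (k-2)) \<le> real (N_BM k n)" by (rule real_bound) (use kpos in simp)
    then show ?thesis using fn_odd[OF od] by simp
  qed
  show ?thesis using E1 O1 O2 le by blast
qed

theorem theorem10:
  fixes k :: nat
  assumes "k \<ge> 3"
  shows "\<exists>n0. \<forall>n\<ge>n0.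
    (even n \<longrightarrow> f n k * real (mB (k - 1)) \<le> real (N_BM k n) \<and> N_BM k n \<le> N_GM k n) \<and>
    (odd n \<longrightarrow> f n k * real (mB (k - 1)) \<le> real (N_GM k n) \<and>
                f n k * real (mB (k - 2)) \<le> real (N_BM k n))"
  using main_n[OF assms] by blast


thm_deps theorem10

end
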